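(* Let $p<q$ be coprime positive integers and $m$ a positive integer; put $k=\gcd(m,q-p)$ and $a=m/k$. Let $A=\mathbb C[X_0,\dots,X_4]$, graded by $\mathbb Z\times\mathbb Z/m\mathbb Z$ with $X_0$ of degree $(1,0)$, $X_1,X_2$ of degree $(-p,-1)$, $X_3,X_4$ of degree $(q,1)$, and for $s\in\mathbb C$ let $J_s=(X_0^{q-p},\;X_2,\;X_4,\;s-X_1^{aq}X_3^{ap})$. Then $\dim(A/J_1)_{(n,d)}\ge 1$ and $\dim(A/J_0)_{(n,d)}\ge 1$ for all $(n,d)\in\mathbb Z\times\mathbb Z/m\mathbb Z$.
   Context: The grading is the weight grading for the action of $G_0\times G_m$ ($G_0\cong\mathbb C^*$, $G_m\cong\mu_m$) on $\mathbb C^5$ given by $t\cdot(x_0,\dots,x_4)=(tx_0,t^{-p}x_1,t^{-p}x_2,t^qx_3,t^qx_4)$ and $\zeta\cdot(x_0,\dots,x_4)=(x_0,\zeta^{-1}x_1,\zeta^{-1}x_2,\zeta x_3,\zeta x_4)$. *)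

theory Defs
  imports Complex_Main "HOL-Library.Poly_Mapping" "HOL-Library.Numeral_Type" "HOL-Library.Extended_Nat"
begin

text \<open>The polynomial ring A = C[X_0,...,X_4]: finitely supported maps from monomials
  (exponent vectors, finitely supported maps 5 to nat) to complex coefficients,
  with the convolution product of Poly_Mapping.\<close>

type_synonym mono5 = "5 \<Rightarrow>\<^sub>0 nat"
type_synonym poly5 = "mono5 \<Rightarrow>\<^sub>0 complex"

definition Var :: "5 \<Rightarrow> poly5" where
  "Var i = Poly_Mapping.single (Poly_Mapping.single i 1) 1"

definition Const :: "complex \<Rightarrow> poly5" where
  "Const c = Poly_Mapping.single 0 c"

text \<open>The Z-component and the Z/mZ-component (as an integer representative) of the
  degree of a monomial, for the grading X_0 : (1,0), X_1,X_2 : (-p,-1), X_3,X_4 : (q,1).\<close>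

definition degZ :: "nat \<Rightarrow> nat \<Rightarrow> mono5 \<Rightarrow> int" where
  "degZ p q \<alpha> = int (Poly_Mapping.lookup \<alpha> 0) - int p * int (Poly_Mapping.lookup \<alpha> 1 + Poly_Mapping.lookup \<alpha> 2)
                 + int q * int (Poly_Mapping.lookup \<alpha> 3 + Poly_Mapping.lookup \<alpha> 4)"

definition degM :: "mono5 \<Rightarrow> int" where
  "degM \<alpha> = int (Poly_Mapping.lookup \<alpha> 3 + Poly_Mapping.lookup \<alpha> 4) - int (Poly_Mapping.lookup \<alpha> 1 + Poly_Mapping.lookup \<alpha> 2)"

definition graded_piece :: "nat \<Rightarrow> nat \<Rightarrow> nat \<Rightarrow> int \<Rightarrow> int \<Rightarrow> poly5 set" where
  "graded_piece p q m n d =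
     {f. \<forall>\<alpha>\<in>Poly_Mapping.keys f. degZ p q \<alpha> = n \<and> degM \<alpha> mod int m = d mod int m}"

definition ideal_gen :: "poly5 list \<Rightarrow> poly5 set" where
  "ideal_gen gs = {f. \<exists>rs. length rs = length gs \<and> f = sum_list (map2 (*) rs gs)}"

definition indep_mod :: "poly5 set \<Rightarrow> poly5 set \<Rightarrow> bool" where
  "indep_mod U S \<longleftrightarrow>
     (\<forall>c. (\<Sum>s\<in>S. Const (c s) * s) \<in> U \<longrightarrow> (\<forall>s\<in>S. c s = 0))"

text \<open>Dimension over C of the quotient V/(U \<inter> V) (possibly infinite).\<close>

definition quot_dim :: "poly5 set \<Rightarrow> poly5 set \<Rightarrow> enat" where
  "quot_dim V U = Sup {enat (card S) | S. finite S \<and> S \<subseteq> V \<and> indep_mod U S}"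

definition J_ideal :: "nat \<Rightarrow> nat \<Rightarrow> nat \<Rightarrow> complex \<Rightarrow> poly5 set" where
  "J_ideal p q a s = ideal_gen
     [Var 0 ^ (q - p), Var 2, Var 4, Const s - Var 1 ^ (a * q) * Var 3 ^ (a * p)]"

end

theory Submission imports Defs begin

definition phi :: "(mono5 \<Rightarrow> bool) \<Rightarrow> poly5 \<Rightarrow> complex" where
  "phi P f = (\<Sum>\<alpha>\<in>Poly_Mapping.keys f. if P \<alpha> then Poly_Mapping.lookup f \<alpha> else 0)"

lemma phi_superset:
  assumes "finite K" "Poly_Mapping.keys f \<subseteq> K"
  shows "phi P f = (\<Sum>\<alpha>\<in>K. if P \<alpha> then Poly_Mapping.lookup f \<alpha> else 0)"
  unfolding phi_def
  by (rule sum.mono_neutral_left[OF assms]) (auto simp: in_keys_iff)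

lemma phi_add: "phi P (f + g) = phi P f + phi P g"
proof -
  let ?K = "Poly_Mapping.keys f \<union> Poly_Mapping.keys g"
  have "phi P (f + g) = (\<Sum>\<alpha>\<in>?K. if P \<alpha> then Poly_Mapping.lookup (f+g) \<alpha> else 0)"
    by (rule phi_superset) (use keys_add[of f g] in auto)
  also have "\<dots> = (\<Sum>\<alpha>\<in>?K. if P \<alpha> then Poly_Mapping.lookup f \<alpha> else 0)
     + (\<Sum>\<alpha>\<in>?K. if P \<alpha> then Poly_Mapping.lookup g \<alpha> else 0)"
    by (simp add: lookup_add sum.distrib[symmetric] if_distrib cong: if_cong)
  also have "\<dots> = phi P f + phi P g"
    by (subst (1 2) phi_superset[of ?K]) auto
  finally show ?thesis .
qed

lemma phi_zero [simp]: "phi P 0 = 0" by (simp add: phi_def)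

lemma phi_uminus: "phi P (- f) = - phi P f"
  using phi_add[of P f "-f"] by (simp add: add_eq_0_iff)

lemma phi_diff: "phi P (f - g) = phi P f - phi P g"
  using phi_add[of P f "-g"] phi_uminus[of P g] by simp

lemma phi_single: "phi P (Poly_Mapping.single a b) = (if P a then b else 0)"
  by (simp add: phi_def)

lemma update_eq_add:
  assumes "a \<notin> Poly_Mapping.keys f"
  shows "Poly_Mapping.update a b f = f + Poly_Mapping.single a b"
  using assms by (intro poly_mapping_eqI) (auto simp: lookup_update lookup_add lookup_single in_keys_iff when_def)

lemma phi_mult:
  assumes "\<And>a b. phi P (Poly_Mapping.single a b * G) = 0"
  shows "phi P (r * G) = 0"
proof (induction r rule: update_induct)
  case const then show ?case by simp
next
  case (update f a b)
  then show ?case by (simp add: update_eq_add distrib_right phi_add assms)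
qed

lemma phi_ideal:
  assumes "\<forall>G\<in>set gs. \<forall>a b. phi P (Poly_Mapping.single a b * G) = 0"
    and "f \<in> ideal_gen gs"
  shows "phi P f = 0"
proof -
  obtain rs where rs: "length rs = length gs" "f = sum_list (map2 (*) rs gs)"
    using assms(2) by (auto simp: ideal_gen_def)
  have "phi P (sum_list (map2 (*) rs gs)) = 0"
    using rs(1) assms(1)
  proof (induction gs arbitrary: rs)
    case Nil then show ?case by simp
  next
    case (Cons g gs)
    then obtain r rs' where "rs = r # rs'" "length rs' = length gs" by (cases rs) auto
    with Cons show ?case by (simp add: phi_add phi_mult)
  qed
  with rs show ?thesis by simp
qed

lemma Var_pow: "Var i ^ n = Poly_Mapping.single (Poly_Mapping.single i n) 1"
  by (induction n) (simp_all add: Var_def mult_single single_add[symmetric] add.commute)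

lemma Const_mult: "Const c * Poly_Mapping.single M 1 = Poly_Mapping.single M c"
  by (simp add: Const_def mult_single)

lemma exists_mono:
  fixes p q m a :: nat and n d :: int
  assumes "0<p" "p<q" "0<a" "int m dvd int a * (int q - int p)"
  shows "\<exists>i j l::nat. i < q - p \<and> (j < a*q \<or> l < a*p) \<and>
     int i - int p * int j + int q * int l = n \<and> (int l - int j) mod int m = d mod int m"
proof -
  define g where "g = int q - int p"
  have g0: "g > 0" using assms by (simp add: g_def)
  define u where "u = (n - int q*d) div g"
  define i0 where "i0 = (n - int q*d) mod g"
  have i0: "0 \<le> i0" "i0 < g" using g0 by (simp_all add: i0_def)
  have n_eq: "n = i0 + g*u + int q * d"
    by (simp add: i0_def u_def)
  define A where "A = int a * int q"
  define B where "B = int a * int p"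
  have A0: "A > 0" and B0: "B > 0" using assms by (simp_all add: A_def B_def)
  obtain c where c: "int a * g = int m * c" using assms(4) g_def by (auto elim: dvdE)
  define t where "t = u div A"
  define j1 where "j1 = u mod A"
  define l1 where "l1 = d + u - t*B"
  have j1: "0 \<le> j1" "j1 < A" using A0 by (simp_all add: j1_def)
  have u_eq: "u = j1 + t*A" by (simp add: j1_def t_def)
  have deg1: "i0 - int p * j1 + int q * l1 = n"
    unfolding n_eq l1_def u_eq g_def A_def B_def by (simp add: algebra_simps)
  have cong1: "(l1 - j1) mod int m = d mod int m"
  proof -
    have "l1 - j1 = d + (t*c) * int m" unfolding l1_def u_eq A_def B_def
      using c unfolding g_def by (simp add: algebra_simps)
    then show ?thesis by simp
  qed
  show ?thesis
  proof (cases "l1 \<ge> 0")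
    case True
    have jq: "nat j1 < a*q" using j1 unfolding A_def by (metis nat_less_iff of_nat_mult)
    show ?thesis
      apply (rule exI[of _ "nat i0"], rule exI[of _ "nat j1"], rule exI[of _ "nat l1"])
      using True i0 j1 jq deg1 cong1 g_def by auto
  next
    case False
    define t2 where "t2 = - (l1 div B)"
    define l2 where "l2 = l1 mod B"
    define j2 where "j2 = j1 + t2 * A"
    have l2: "0 \<le> l2" "l2 < B" using B0 by (simp_all add: l2_def)
    have t2: "t2 \<ge> 0" using False B0 by (simp add: t2_def div_neg_pos_less0 less_imp_le)
    have l2_eq: "l2 = l1 + t2*B" by (simp add: l2_def t2_def) (metis add.commute add_diff_cancel_left' diff_add_cancel minus_div_mult_eq_mod mult.commute)
    have j2: "0 \<le> j2" using t2 j1 A0 by (simp add: j2_def)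
    have deg2: "i0 - int p * j2 + int q * l2 = n"
      using deg1 unfolding l2_eq j2_def A_def B_def by (simp add: algebra_simps)
    have cong2: "(l2 - j2) mod int m = d mod int m"
    proof -
      have "l2 - j2 = (l1 - j1) + (- t2*c) * int m" unfolding l2_eq j2_def A_def B_def
        using c unfolding g_def by (simp add: algebra_simps)
      then show ?thesis using cong1 by (metis mod_mult_self1 mod_add_left_eq)
    qed
    have lp: "nat l2 < a*p" using l2 unfolding B_def by (metis nat_less_iff of_nat_mult)
    show ?thesis
      apply (rule exI[of _ "nat i0"], rule exI[of _ "nat j2"], rule exI[of _ "nat l2"])
      using l2 lp i0 j2 deg2 cong2 g_def by auto
  qed
qed

lemma key_lemma:
  assumes "P M" and "\<forall>G\<in>set gs. \<forall>a b. phi P (Poly_Mapping.single a b * G) = 0"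
    and "Poly_Mapping.single M 1 \<in> V"
  shows "quot_dim V (ideal_gen gs) \<ge> 1"
proof -
  let ?x = "Poly_Mapping.single M (1::complex)"
  have "indep_mod (ideal_gen gs) {?x}"
    unfolding indep_mod_def
  proof (intro allI impI ballI)
    fix c s assume h: "(\<Sum>s\<in>{?x}. Const (c s) * s) \<in> ideal_gen gs" and s: "s \<in> {?x}"
    have "phi P (Poly_Mapping.single M (c ?x)) = 0"
      using phi_ideal[OF assms(2)] h by (simp add: Const_mult)
    then show "c s = 0" using s assms(1) by (simp add: phi_single)
  qed
  then have "enat (card {?x}) \<in> {enat (card S) | S. finite S \<and> S \<subseteq> V \<and> indep_mod (ideal_gen gs) S}"
    using assms(3) by blast
  then have "enat (card {?x}) \<le> quot_dim V (ideal_gen gs)"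
    unfolding quot_dim_def by (rule Sup_upper)
  then show ?thesis by (simp add: one_enat_def)
qed

lemma lk5: "Poly_Mapping.lookup (Poly_Mapping.single (0::5) x0 + Poly_Mapping.single 1 x1 + Poly_Mapping.single 3 x3) k
   = (if k = 0 then x0 else if k = 1 then x1 else if k = 3 then x3 else 0)"
  by (simp add: lookup_add lookup_single when_def)

lemma test: "(0::5) \<noteq> 1 \<and> (2::5) \<noteq> 3 \<and> (4::5) \<noteq> 0" by simp

lemma gen_rewrite:
  "Const s - Var 1 ^ (a * q) * Var 3 ^ (a * p) =
   Poly_Mapping.single 0 s - Poly_Mapping.single (Poly_Mapping.single 1 (a*q) + Poly_Mapping.single 3 (a*p)) 1"
  by (simp add: Var_pow Const_def mult_single)

lemma mono_shift:
  "phi P (Poly_Mapping.single a b * Poly_Mapping.single g 1) = (if P (a + g) then b else 0)"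
  by (simp add: mult_single phi_single)

theorem lemma4p7:
  fixes p q m :: nat
  assumes "0 < p" and "p < q" and "coprime p q" and "0 < m"
  defines "k \<equiv> gcd m (q - p)"
  defines "a \<equiv> m div k"
  shows "\<forall>n d :: int.
           quot_dim (graded_piece p q m n d) (J_ideal p q a 1) \<ge> 1 \<and>
           quot_dim (graded_piece p q m n d) (J_ideal p q a 0) \<ge> 1"
proof (intro allI)
  fix n d :: int
  have k0: "k > 0" using assms(4) by (simp add: k_def)
  have mak: "m = a * k" by (simp add: a_def k_def)
  have a0: "a > 0" using mak assms(4) by (cases a) auto
  have kdvd: "k dvd q - p" by (simp add: k_def)
  have dvd: "int m dvd int a * (int q - int p)"
  proof -
    have "m dvd a * (q - p)" using kdvd mak by (simp add: mult_dvd_mono)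
    then show ?thesis using assms(2) by (metis of_nat_diff less_imp_le of_nat_dvd_iff of_nat_mult)
  qed
  obtain i j l :: nat where ijl: "i < q - p" "j < a*q \<or> l < a*p"
     "int i - int p * int j + int q * int l = n" "(int l - int j) mod int m = d mod int m"
    using exists_mono[OF assms(1,2) a0 dvd] by blast
  define M :: mono5 where "M = Poly_Mapping.single 0 i + Poly_Mapping.single 1 j + Poly_Mapping.single 3 l"
  have lkM: "Poly_Mapping.lookup M k' = (if k' = 0 then i else if k' = 1 then j else if k' = 3 then l else 0)" for k'
    unfolding M_def by (rule lk5)
  have inV: "Poly_Mapping.single M 1 \<in> graded_piece p q m n d"
    using ijl(3,4) by (simp add: graded_piece_def degZ_def degM_def lkM)
  define \<beta> :: mono5 where "\<beta> = Poly_Mapping.single 1 (a*q) + Poly_Mapping.single 3 (a*p)"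
  have lkb: "Poly_Mapping.lookup \<beta> k' = (if k' = 1 then a*q else if k' = 3 then a*p else 0)" for k'
    unfolding \<beta>_def by (simp add: lookup_add lookup_single when_def)
  have J: "J_ideal p q a s = ideal_gen [Poly_Mapping.single (Poly_Mapping.single 0 (q-p)) 1,
      Poly_Mapping.single (Poly_Mapping.single 2 1) 1, Poly_Mapping.single (Poly_Mapping.single 4 1) 1,
      Poly_Mapping.single 0 s - Poly_Mapping.single \<beta> 1]" for s
    unfolding J_ideal_def gen_rewrite \<beta>_def Var_pow by (simp add: Var_def Const_def mult_single)
  define P0 :: "mono5 \<Rightarrow> bool" where "P0 \<alpha> = (\<forall>k'. Poly_Mapping.lookup \<alpha> k' = Poly_Mapping.lookup M k')" for \<alpha>
  have "quot_dim (graded_piece p q m n d) (J_ideal p q a 0) \<ge> 1"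
    unfolding J
  proof (rule key_lemma[OF _ _ inV])
    show "P0 M" by (simp add: P0_def)
    show "\<forall>G\<in>set [Poly_Mapping.single (Poly_Mapping.single 0 (q-p)) 1,
      Poly_Mapping.single (Poly_Mapping.single 2 1) 1, Poly_Mapping.single (Poly_Mapping.single 4 1) 1,
      Poly_Mapping.single 0 0 - Poly_Mapping.single \<beta> 1]. \<forall>a b. phi P0 (Poly_Mapping.single a b * G) = 0"
    proof (simp only: set_simps ball_simps, intro conjI allI)
      fix x b
      have "\<not> P0 (x + Poly_Mapping.single 0 (q-p))"
      proof
        assume "P0 (x + Poly_Mapping.single 0 (q-p))"
        then have "Poly_Mapping.lookup (x + Poly_Mapping.single 0 (q-p)) 0 = Poly_Mapping.lookup M 0"
          unfolding P0_def by blast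
        then show False using ijl(1) by (simp add: lookup_add lkM)
      qed
      then show "phi P0 (Poly_Mapping.single x b * Poly_Mapping.single (Poly_Mapping.single 0 (q-p)) 1) = 0"
        by (simp add: mono_shift)
      have "\<not> P0 (x + Poly_Mapping.single 2 1)"
      proof
        assume "P0 (x + Poly_Mapping.single 2 1)"
        then have "Poly_Mapping.lookup (x + Poly_Mapping.single 2 1) 2 = Poly_Mapping.lookup M 2"
          unfolding P0_def by blast
        then show False by (simp add: lookup_add lkM)
      qed
      then show "phi P0 (Poly_Mapping.single x b * Poly_Mapping.single (Poly_Mapping.single 2 1) 1) = 0"
        by (simp add: mono_shift)
      have "\<not> P0 (x + Poly_Mapping.single 4 1)"
      proof
        assume "P0 (x + Poly_Mapping.single 4 1)"
        then have "Poly_Mapping.lookup (x + Poly_Mapping.single 4 1) 4 = Poly_Mapping.lookup M 4"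
          unfolding P0_def by blast
        then show False by (simp add: lookup_add lkM)
      qed
      then show "phi P0 (Poly_Mapping.single x b * Poly_Mapping.single (Poly_Mapping.single 4 1) 1) = 0"
        by (simp add: mono_shift)
      have "\<not> P0 (x + \<beta>)"
      proof
        assume "P0 (x + \<beta>)"
        then have "Poly_Mapping.lookup (x + \<beta>) 1 = Poly_Mapping.lookup M 1"
          "Poly_Mapping.lookup (x + \<beta>) 3 = Poly_Mapping.lookup M 3"
          unfolding P0_def by blast+
        then show False using ijl(2) by (simp add: lookup_add lkM lkb)
      qed
      then show "phi P0 (Poly_Mapping.single x b * (Poly_Mapping.single 0 0 - Poly_Mapping.single \<beta> 1)) = 0"
        by (simp add: phi_uminus mono_shift)
    qed simp
  qed
  moreover
  define P1 :: "mono5 \<Rightarrow> bool" where "P1 \<alpha> = (Poly_Mapping.lookup \<alpha> 0 = i \<and> Poly_Mapping.lookup \<alpha> 2 = 0 \<and>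
     Poly_Mapping.lookup \<alpha> 4 = 0 \<and> (\<exists>t. Poly_Mapping.lookup \<alpha> 1 = j + t*(a*q) \<and> Poly_Mapping.lookup \<alpha> 3 = l + t*(a*p)))" for \<alpha>
  have P1b: "P1 (x + \<beta>) = P1 x" for x
  proof
    assume "P1 (x + \<beta>)"
    then obtain t where t: "Poly_Mapping.lookup x 0 = i" "Poly_Mapping.lookup x 2 = 0" "Poly_Mapping.lookup x 4 = 0"
      "Poly_Mapping.lookup x 1 + a*q = j + t*(a*q)" "Poly_Mapping.lookup x 3 + a*p = l + t*(a*p)"
      by (auto simp: P1_def lookup_add lkb)
    have "t \<noteq> 0"
    proof
      assume "t = 0"
      then show False using t(4,5) ijl(2) by simp
    qed
    then obtain t' where "t = Suc t'" by (cases t) auto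
    with t show "P1 x" unfolding P1_def by auto
  next
    assume "P1 x"
    then obtain t where t: "Poly_Mapping.lookup x 0 = i" "Poly_Mapping.lookup x 2 = 0" "Poly_Mapping.lookup x 4 = 0"
      "Poly_Mapping.lookup x 1 = j + t*(a*q)" "Poly_Mapping.lookup x 3 = l + t*(a*p)"
      by (auto simp: P1_def)
    show "P1 (x + \<beta>)" unfolding P1_def using t
      by (auto simp: lookup_add lkb intro!: exI[of _ "Suc t"])
  qed
  have "quot_dim (graded_piece p q m n d) (J_ideal p q a 1) \<ge> 1"
    unfolding J
  proof (rule key_lemma[OF _ _ inV])
    show "P1 M" by (auto simp: P1_def lkM intro!: exI[of _ 0])
    show "\<forall>G\<in>set [Poly_Mapping.single (Poly_Mapping.single 0 (q-p)) 1,
      Poly_Mapping.single (Poly_Mapping.single 2 1) 1, Poly_Mapping.single (Poly_Mapping.single 4 1) 1,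
      Poly_Mapping.single 0 1 - Poly_Mapping.single \<beta> 1]. \<forall>a b. phi P1 (Poly_Mapping.single a b * G) = 0"
    proof (simp only: set_simps ball_simps, intro conjI allI)
      fix x b
      show "phi P1 (Poly_Mapping.single x b * Poly_Mapping.single (Poly_Mapping.single 0 (q-p)) 1) = 0"
        unfolding mono_shift P1_def
        using ijl(1) by (auto simp: lookup_add)
      show "phi P1 (Poly_Mapping.single x b * Poly_Mapping.single (Poly_Mapping.single 2 1) 1) = 0"
        unfolding mono_shift P1_def
        by (auto simp: lookup_add)
      show "phi P1 (Poly_Mapping.single x b * Poly_Mapping.single (Poly_Mapping.single 4 1) 1) = 0"
        unfolding mono_shift P1_def
        by (auto simp: lookup_add)
      have e: "Poly_Mapping.single x b * Poly_Mapping.single 0 1 = Poly_Mapping.single x b"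
        by (simp add: mult_single)
      show "phi P1 (Poly_Mapping.single x b * (Poly_Mapping.single 0 1 - Poly_Mapping.single \<beta> 1)) = 0"
        by (simp add: right_diff_distrib phi_diff mono_shift P1b e phi_single)
    qed simp
  qed
  ultimately show "quot_dim (graded_piece p q m n d) (J_ideal p q a 1) \<ge> 1 \<and>
           quot_dim (graded_piece p q m n d) (J_ideal p q a 0) \<ge> 1" by simp
qed

end
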